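(* An abelian group is almost divisible if and only if it is the direct sum of a divisible group and a bounded group. In particular, every almost divisible abelian group is algebraically compact.
   Context: For a prime $p$, the $p$-length $l_p(A)$ of an abelian group $A$ is the smallest ordinal $\lambda$ such that $p^\lambda A$ is $p$-divisible, where $p^0A=A$, $p^{\alpha+1}A=p(p^\alpha A)$ and $p^\alpha A=\bigcap_{\beta<\alpha}p^\beta A$ for limit $\alpha$. An abelian group $A$ is called almost divisible if $l_p(A)=0$ for all but finitely many primes $p$ and $l_p(A)<\omega$ for every prime $p$. A group is bounded if $mA=0$ for some integer $m\ge1$. *)

theory Defs
  imports "HOL-Computational_Algebra.Primes"
begin

text \<open>Abelian groups are modelled as types of class ab_group_add (the group is UNIV).\<close>

fun mulN :: "nat \<Rightarrow> 'a::ab_group_add \<Rightarrow> 'a" where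
  "mulN 0 x = 0"
| "mulN (Suc n) x = x + mulN n x"

definition is_subgroup :: "'a::ab_group_add set \<Rightarrow> bool" where
  "is_subgroup S \<longleftrightarrow> 0 \<in> S \<and> (\<forall>x\<in>S. \<forall>y\<in>S. x + y \<in> S) \<and> (\<forall>x\<in>S. - x \<in> S)"

definition p_divisible :: "nat \<Rightarrow> 'a::ab_group_add set \<Rightarrow> bool" where
  "p_divisible p S \<longleftrightarrow> (\<forall>x\<in>S. \<exists>y\<in>S. mulN p y = x)"

fun ppow :: "nat \<Rightarrow> nat \<Rightarrow> 'a::ab_group_add set" where
  "ppow p 0 = UNIV"
| "ppow p (Suc n) = mulN p ` ppow p n"

text \<open>l_p(A) = 0 iff A is p-divisible; l_p(A) < omega iff p^n A is p-divisible for some finite n.\<close>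
definition almost_divisible :: "'a::ab_group_add itself \<Rightarrow> bool" where
  "almost_divisible _ \<longleftrightarrow>
     finite {p::nat. prime p \<and> \<not> p_divisible p (UNIV :: 'a set)} \<and>
     (\<forall>p::nat. prime p \<longrightarrow> (\<exists>n. p_divisible p (ppow p n :: 'a set)))"

definition divisible :: "'a::ab_group_add set \<Rightarrow> bool" where
  "divisible S \<longleftrightarrow> (\<forall>n::nat. n \<ge> 1 \<longrightarrow> (\<forall>x\<in>S. \<exists>y\<in>S. mulN n y = x))"

definition bounded_grp :: "'a::ab_group_add set \<Rightarrow> bool" where
  "bounded_grp S \<longleftrightarrow> (\<exists>m::nat. m \<ge> 1 \<and> (\<forall>x\<in>S. mulN m x = 0))"

definition internal_direct_sum :: "'a::ab_group_add set \<Rightarrow> 'a set \<Rightarrow> 'a set \<Rightarrow> bool" where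
  "internal_direct_sum G S T \<longleftrightarrow> is_subgroup S \<and> is_subgroup T \<and> S \<subseteq> G \<and> T \<subseteq> G \<and>
     S \<inter> T = {0} \<and> (\<forall>x\<in>G. \<exists>s\<in>S. \<exists>t\<in>T. x = s + t)"

definition group_hom :: "('a::ab_group_add \<Rightarrow> 'b::ab_group_add) \<Rightarrow> bool" where
  "group_hom f \<longleftrightarrow> (\<forall>x y. f (x + y) = f x + f y)"

definition pure_embedding :: "('a::ab_group_add \<Rightarrow> 'b::ab_group_add) \<Rightarrow> bool" where
  "pure_embedding f \<longleftrightarrow> group_hom f \<and> inj f \<and>
     (\<forall>n::nat. \<forall>a. (\<exists>z::'b. mulN n z = f a) \<longrightarrow> (\<exists>a'. mulN n (f a') = f a))"

text \<open>Groups containing A are represented by a pure embedding into an arbitrary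
  type 'b; the theorem is universally quantified over 'b.\<close>
definition alg_compact_wrt :: "'a::ab_group_add itself \<Rightarrow> 'b::ab_group_add itself \<Rightarrow> bool" where
  "alg_compact_wrt _ _ \<longleftrightarrow>
     (\<forall>f :: 'a \<Rightarrow> 'b. pure_embedding f \<longrightarrow> (\<exists>C. internal_direct_sum UNIV (range f) C))"

end

theory Submission
  imports Defs
begin

lemma mulN_add: "mulN n (x + y) = mulN n x + (mulN n (y::'a::ab_group_add))"
  by (induction n) (auto simp: algebra_simps)
lemma mulN_plus: "mulN (a + b) (x::'a::ab_group_add) = mulN a x + mulN b x"
  by (induction a) (auto simp: algebra_simps)
lemma mulN_mult: "mulN (a * b) (x::'a::ab_group_add) = mulN a (mulN b x)"
  by (induction a) (auto simp: mulN_plus mulN_add)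
lemma mulN_comm: "mulN a (mulN b x) = mulN b (mulN a (x::'a::ab_group_add))"
  by (metis mulN_mult mult.commute)
lemma mulN_zero[simp]: "mulN n (0::'a::ab_group_add) = 0"
  by (induction n) auto
lemma mulN_one[simp]: "mulN 1 (x::'a::ab_group_add) = x"
  by simp
lemma mulN_minus: "mulN n (- x) = - mulN n (x::'a::ab_group_add)"
  by (induction n) (auto simp: algebra_simps)
lemma mulN_diff: "mulN n (x - y) = mulN n x - mulN n (y::'a::ab_group_add)"
  using mulN_add[of n x "-y"] mulN_minus[of n y] by simp

lemma sg_zero: "is_subgroup S \<Longrightarrow> 0 \<in> S" by (simp add: is_subgroup_def)
lemma sg_add: "is_subgroup S \<Longrightarrow> x \<in> S \<Longrightarrow> y \<in> S \<Longrightarrow> x + y \<in> S" by (simp add: is_subgroup_def)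
lemma sg_neg: "is_subgroup S \<Longrightarrow> x \<in> S \<Longrightarrow> - x \<in> S" by (simp add: is_subgroup_def)
lemma sg_diff: "is_subgroup S \<Longrightarrow> x \<in> S \<Longrightarrow> y \<in> S \<Longrightarrow> x - y \<in> S"
  using sg_add sg_neg by (metis diff_conv_add_uminus)
lemma sg_mulN: "is_subgroup S \<Longrightarrow> x \<in> S \<Longrightarrow> mulN n x \<in> S"
  by (induction n) (auto intro: sg_zero sg_add)
lemma sg_neg_iff: "is_subgroup S \<Longrightarrow> - x \<in> S \<longleftrightarrow> x \<in> S"
  using sg_neg by fastforce

definition ssum :: "'a::ab_group_add set \<Rightarrow> 'a set \<Rightarrow> 'a set" where
  "ssum S T = {s + t |s t. s \<in> S \<and> t \<in> T}"

lemma ssum_I: "s \<in> S \<Longrightarrow> t \<in> T \<Longrightarrow> s + t \<in> ssum S T" unfolding ssum_def by blast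
lemma ssum_E: "x \<in> ssum S T \<Longrightarrow> (\<And>s t. s \<in> S \<Longrightarrow> t \<in> T \<Longrightarrow> x = s + t \<Longrightarrow> P) \<Longrightarrow> P"
  unfolding ssum_def by blast

lemma sg_ssum: assumes S: "is_subgroup S" and T: "is_subgroup T" shows "is_subgroup (ssum S T)"
  unfolding is_subgroup_def
proof (intro conjI ballI)
  have "0 + 0 \<in> ssum S T" using sg_zero[OF S] sg_zero[OF T] by (rule ssum_I)
  then show "0 \<in> ssum S T" by simp
next
  fix x y assume "x \<in> ssum S T" "y \<in> ssum S T"
  then obtain s t s' t' where "x = s + t" "y = s' + t'" "s \<in> S" "t \<in> T" "s' \<in> S" "t' \<in> T"
    by (metis ssum_E)
  moreover have "s + t + (s' + t') = (s + s') + (t + t')" by (simp add: algebra_simps)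
  moreover have "(s + s') + (t + t') \<in> ssum S T"
    using calculation by (intro ssum_I sg_add[OF S] sg_add[OF T])
  ultimately show "x + y \<in> ssum S T" by metis
next
  fix x assume "x \<in> ssum S T"
  then obtain s t where "x = s + t" "s \<in> S" "t \<in> T" by (metis ssum_E)
  moreover have "- (s + t) = (-s) + (-t)" by simp
  moreover have "(-s) + (-t) \<in> ssum S T" using calculation by (intro ssum_I sg_neg[OF S] sg_neg[OF T])
  ultimately show "- x \<in> ssum S T" by metis
qed

lemma ssum_left: "is_subgroup T \<Longrightarrow> s \<in> S \<Longrightarrow> s \<in> ssum S T"
  using ssum_I[of s S 0 T] sg_zero by force
lemma ssum_right: "is_subgroup S \<Longrightarrow> t \<in> T \<Longrightarrow> t \<in> ssum S T"
  using ssum_I[of 0 S t T] sg_zero by force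

lemma bez: assumes "coprime a (b::nat)" "a \<noteq> 0" shows "\<exists>u v. a * u = b * v + 1"
  using bezout_nat[OF assms(2), of b] assms(1) by simp

lemma cop_lemma:
  assumes S: "is_subgroup S" and c: "coprime a (b::nat)" and a: "mulN a x \<in> S" and b: "mulN b x \<in> S"
  shows "x \<in> S"
proof (cases "a = 0")
  case True
  then have "b = 1" using c by simp
  then show ?thesis using b by simp
next
  case False
  obtain u v where e: "a * u = b * v + 1" using bez[OF c False] by blast
  have "mulN (a*u) x = mulN (b*v) x + x" using e mulN_plus[of "b*v" 1 x] by simp
  then have "x = mulN u (mulN a x) - mulN v (mulN b x)"
    by (simp add: mulN_mult mulN_comm[of u a] mulN_comm[of v b])
  moreover have "mulN u (mulN a x) - mulN v (mulN b x) \<in> S"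
    by (intro sg_diff[OF S] sg_mulN[OF S] a b)
  ultimately show ?thesis by simp
qed

lemma decomp: assumes "prime (p::nat)" "n \<noteq> 0" shows "\<exists>r n'. n = p^r * n' \<and> \<not> p dvd n'"
  using assms(2)
proof (induction n rule: less_induct)
  case (less n)
  show ?case
  proof (cases "p dvd n")
    case True
    then obtain q where q: "n = p * q" by blast
    have "q < n" "q \<noteq> 0" using q less.prems prime_gt_1_nat[OF assms(1)] by auto
    then obtain r n' where r: "q = p^r * n'" "\<not> p dvd n'" using less.IH by blast
    have "n = p^(Suc r) * n'" using q r(1) by (simp add: mult.assoc)
    then show ?thesis using r(2) by blast
  next
    case False
    have "n = p^0 * n" by simp
    then show ?thesis using False by blast
  qed
qed


lemma chain_union_sg:
  assumes ch: "Ch \<in> chains F" and ne: "Ch \<noteq> {}" and sg: "\<And>X. X \<in> F \<Longrightarrow> is_subgroup X"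
  shows "is_subgroup (\<Union>Ch)"
  unfolding is_subgroup_def
proof (intro conjI ballI)
  from ne obtain X where X: "X \<in> Ch" by blast
  then have "X \<in> F" using chainsD2[OF ch] by blast
  then show "0 \<in> \<Union>Ch" using X sg sg_zero by blast
next
  fix x y assume "x \<in> \<Union>Ch" "y \<in> \<Union>Ch"
  then obtain X Y where XY: "X \<in> Ch" "Y \<in> Ch" "x \<in> X" "y \<in> Y" by blast
  have F: "X \<in> F" "Y \<in> F" using XY chainsD2[OF ch] by blast+
  from chainsD[OF ch XY(1,2)] show "x + y \<in> \<Union>Ch"
  proof
    assume "X \<subseteq> Y" then have "x + y \<in> Y" using XY sg[OF F(2)] sg_add by blast
    then show ?thesis using XY by blast
  next
    assume "Y \<subseteq> X" then have "x + y \<in> X" using XY sg[OF F(1)] sg_add by blast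
    then show ?thesis using XY by blast
  qed
next
  fix x assume "x \<in> \<Union>Ch"
  then obtain X where XY: "X \<in> Ch" "x \<in> X" by blast
  have F: "X \<in> F" using XY chainsD2[OF ch] by blast
  have "- x \<in> X" using sg[OF F] XY sg_neg by blast
  then show "- x \<in> \<Union>Ch" using XY by blast
qed

lemma sg_single0: "is_subgroup {0::'a::ab_group_add}"
  unfolding is_subgroup_def by simp

lemma ext_div:
  assumes H: "is_subgroup H" and D: "is_subgroup D" and C: "is_subgroup C" "C \<subseteq> H" "C \<inter> D \<subseteq> {0}"
    and z: "z \<in> H" "z \<notin> ssum D C" "\<forall>n. mulN n z \<in> ssum D C \<longrightarrow> mulN n z \<in> C"
  shows "\<exists>C'. is_subgroup C' \<and> C' \<subseteq> H \<and> C' \<inter> D \<subseteq> {0} \<and> C \<subseteq> C' \<and> C' \<noteq> C"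
proof -
  define C' where "C' = {c + mulN i z - mulN j z |c i j. c \<in> C}"
  have K: "is_subgroup (ssum D C)" using sg_ssum[OF D C(1)] .
  have sgC': "is_subgroup C'"
    unfolding is_subgroup_def
  proof (intro conjI ballI)
    have "0 = 0 + mulN 0 z - mulN 0 z" by simp
    then show "0 \<in> C'" unfolding C'_def using sg_zero[OF C(1)] by blast
  next
    fix x y assume "x \<in> C'" "y \<in> C'"
    then obtain c i j c' i' j' where e: "x = c + mulN i z - mulN j z" "y = c' + mulN i' z - mulN j' z"
      "c \<in> C" "c' \<in> C" unfolding C'_def by blast
    have "x + y = (c + c') + mulN (i + i') z - mulN (j + j') z" unfolding e(1,2) by (simp add: mulN_plus algebra_simps)
    then show "x + y \<in> C'" unfolding C'_def using sg_add[OF C(1) e(3,4)] by blast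
  next
    fix x assume "x \<in> C'"
    then obtain c i j where e: "x = c + mulN i z - mulN j z" "c \<in> C" unfolding C'_def by blast
    have "- x = (- c) + mulN j z - mulN i z" using e by (simp add: algebra_simps)
    then show "- x \<in> C'" unfolding C'_def using sg_neg[OF C(1) e(2)] by blast
  qed
  have "C' \<subseteq> H"
  proof
    fix x assume "x \<in> C'"
    then obtain c i j where e: "x = c + mulN i z - mulN j z" "c \<in> C" unfolding C'_def by blast
    have "c \<in> H" using e C by blast
    then show "x \<in> H" using e(1) sg_diff[OF H] sg_add[OF H] sg_mulN[OF H z(1)] by metis
  qed
  moreover have "C' \<inter> D \<subseteq> {0}"
  proof
    fix w assume w: "w \<in> C' \<inter> D"
    then obtain c i j where e: "w = c + mulN i z - mulN j z" "c \<in> C" unfolding C'_def by blast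
    have wD: "w \<in> D" using w by blast
    have "w \<in> C"
    proof (cases "j \<le> i")
      case True
      have "mulN i z = mulN (i - j) z + mulN j z" using True mulN_plus[of "i-j" j z] by simp
      then have w1: "w = c + mulN (i - j) z" using e(1) by simp
      then have "mulN (i - j) z = w + (- c)" by (simp add: algebra_simps)
      moreover have "w + (- c) \<in> ssum D C" using wD sg_neg[OF C(1) e(2)] by (rule ssum_I)
      ultimately have "mulN (i - j) z \<in> C" using z(3) by metis
      then show ?thesis using w1 sg_add[OF C(1) e(2)] by simp
    next
      case False
      have "mulN j z = mulN (j - i) z + mulN i z" using False mulN_plus[of "j-i" i z] by simp
      then have w1: "w = c - mulN (j - i) z" using e(1) by simp
      then have "mulN (j - i) z = (- w) + c" by (simp add: algebra_simps)
      moreover have "(- w) + c \<in> ssum D C" using sg_neg[OF D wD] e(2) by (rule ssum_I)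
      ultimately have "mulN (j - i) z \<in> C" using z(3) by metis
      then show ?thesis using w1 sg_diff[OF C(1) e(2)] by simp
    qed
    then show "w \<in> {0}" using wD C(3) by blast
  qed
  moreover have "C \<subseteq> C'"
  proof
    fix c assume "c \<in> C"
    moreover have "c = c + mulN 0 z - mulN 0 z" by simp
    ultimately show "c \<in> C'" unfolding C'_def by blast
  qed
  moreover have "z \<in> C'"
  proof -
    have "z = 0 + mulN 1 z - mulN 0 z" by simp
    then show ?thesis unfolding C'_def using sg_zero[OF C(1)] by blast
  qed
  moreover have "z \<notin> C" using z(2) ssum_right[OF D] by blast
  ultimately show ?thesis using sgC' by blast
qed

lemma find_z:
  assumes H: "is_subgroup H" and D: "is_subgroup D" "D \<subseteq> H" and C: "is_subgroup C" "C \<subseteq> H"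
    and dv: "\<forall>n\<ge>1. \<forall>x\<in>D. \<exists>y\<in>D. mulN n y = x"
    and x: "x \<in> H" "x \<notin> ssum D C"
  shows "\<exists>z. z \<in> H \<and> z \<notin> ssum D C \<and> (\<forall>n. mulN n z \<in> ssum D C \<longrightarrow> mulN n z \<in> C)"
proof (cases "\<exists>k. k \<ge> 1 \<and> mulN k x \<in> ssum D C")
  case False
  have "\<forall>n. mulN n x \<in> ssum D C \<longrightarrow> mulN n x \<in> C"
  proof (intro allI impI)
    fix n assume "mulN n x \<in> ssum D C"
    then have "n = 0" using False by (cases n) auto
    then show "mulN n x \<in> C" using sg_zero[OF C(1)] by simp
  qed
  then show ?thesis using x by blast
next
  case True
  let ?K = "ssum D C"
  have K: "is_subgroup ?K" using sg_ssum[OF D(1) C(1)] .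
  define k where "k = (LEAST k. k \<ge> 1 \<and> mulN k x \<in> ?K)"
  have k: "k \<ge> 1" "mulN k x \<in> ?K" using LeastI_ex[OF True] unfolding k_def by auto
  have kmin: "\<And>q. q \<ge> 1 \<Longrightarrow> q < k \<Longrightarrow> mulN q x \<notin> ?K"
    using not_less_Least unfolding k_def by blast
  have "k \<noteq> 1" using k x(2) by auto
  then obtain p where p: "prime p" "p dvd k" using prime_factor_nat by blast
  then obtain q where kq: "k = p * q" by blast
  have p2: "p \<ge> 2" using prime_ge_2_nat[OF p(1)] .
  have "q \<ge> 1" using kq k(1) by (cases q) auto
  moreover have "q < k" using kq p2 \<open>q \<ge> 1\<close> by simp
  ultimately have yK: "mulN q x \<notin> ?K" using kmin by blast
  define y where "y = mulN q x"
  have "mulN p y = mulN k x" unfolding y_def kq mulN_mult ..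
  then obtain d c where dc: "d \<in> D" "c \<in> C" "mulN p y = d + c" using k(2) by (metis ssum_E)
  obtain d' where d': "d' \<in> D" "mulN p d' = d" using dv[rule_format, of p d] p2 dc(1) by auto
  define z where "z = y - d'"
  have pz: "mulN p z = c" unfolding z_def mulN_diff dc(3) d'(2) by simp
  have zH: "z \<in> H" unfolding z_def y_def using sg_diff[OF H] sg_mulN[OF H x(1)] d'(1) D(2) by blast
  have znK: "z \<notin> ?K"
  proof
    assume "z \<in> ?K"
    moreover have "d' \<in> ?K" using ssum_left[OF C(1) d'(1)] .
    ultimately have "z + d' \<in> ?K" using sg_add[OF K] by blast
    then show False using yK unfolding z_def y_def by simp
  qed
  have "\<forall>n. mulN n z \<in> ?K \<longrightarrow> mulN n z \<in> C"
  proof (intro allI impI)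
    fix n assume nK: "mulN n z \<in> ?K"
    show "mulN n z \<in> C"
    proof (cases "p dvd n")
      case True
      then obtain r where "n = p * r" by blast
      then have "mulN n z = mulN r c" by (simp add: mulN_mult mulN_comm[of p r z] pz)
      then show ?thesis using sg_mulN[OF C(1) dc(2)] by simp
    next
      case False
      have "coprime p n" using prime_imp_coprime[OF p(1) False] .
      moreover have "mulN p z \<in> ?K" using pz ssum_right[OF D(1) dc(2)] by simp
      ultimately have "z \<in> ?K" using cop_lemma[OF K _ _ nK] by blast
      then show ?thesis using znK by blast
    qed
  qed
  then show ?thesis using zH znK by blast
qed

lemma div_summand:
  assumes H: "is_subgroup H" and D: "is_subgroup D" "D \<subseteq> H"
    and dv: "\<forall>n\<ge>1. \<forall>x\<in>D. \<exists>y\<in>D. mulN n y = x"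
  shows "\<exists>C. is_subgroup C \<and> C \<subseteq> H \<and> C \<inter> D \<subseteq> {0} \<and> (\<forall>x\<in>H. \<exists>d\<in>D. \<exists>c\<in>C. x = d + c)"
proof -
  define F where "F = {C. is_subgroup C \<and> C \<subseteq> H \<and> C \<inter> D \<subseteq> {0}}"
  have "\<forall>Ch\<in>chains F. \<exists>U\<in>F. \<forall>X\<in>Ch. X \<subseteq> U"
  proof
    fix Ch assume ch: "Ch \<in> chains F"
    show "\<exists>U\<in>F. \<forall>X\<in>Ch. X \<subseteq> U"
    proof (cases "Ch = {}")
      case True
      have "{0} \<in> F" unfolding F_def using sg_single0 sg_zero[OF H] by auto
      then show ?thesis using True by blast
    next
      case False
      have "is_subgroup (\<Union>Ch)" by (rule chain_union_sg[OF ch False]) (simp add: F_def)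
      moreover have "\<Union>Ch \<subseteq> H" "\<Union>Ch \<inter> D \<subseteq> {0}" using chainsD2[OF ch] unfolding F_def by blast+
      ultimately show ?thesis unfolding F_def by blast
    qed
  qed
  from Zorn_Lemma2[OF this] obtain M where M: "M \<in> F" and max: "\<forall>X\<in>F. M \<subseteq> X \<longrightarrow> X = M" by blast
  have Ms: "is_subgroup M" "M \<subseteq> H" "M \<inter> D \<subseteq> {0}" using M unfolding F_def by auto
  have "\<forall>x\<in>H. x \<in> ssum D M"
  proof (rule ccontr)
    assume "\<not> (\<forall>x\<in>H. x \<in> ssum D M)"
    then obtain x where "x \<in> H" "x \<notin> ssum D M" by blast
    then obtain z where "z \<in> H" "z \<notin> ssum D M" "\<forall>n. mulN n z \<in> ssum D M \<longrightarrow> mulN n z \<in> M"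
      using find_z[OF H D Ms(1,2) dv] by blast
    then obtain C' where "is_subgroup C'" "C' \<subseteq> H" "C' \<inter> D \<subseteq> {0}" "M \<subseteq> C'" "C' \<noteq> M"
      using ext_div[OF H D(1) Ms] by blast
    then show False using max unfolding F_def by blast
  qed
  then have "\<forall>x\<in>H. \<exists>d\<in>D. \<exists>c\<in>M. x = d + c" unfolding ssum_def by blast
  then show ?thesis using Ms by blast
qed


lemma ppow_range: "ppow p n = range (mulN (p ^ n) :: 'a::ab_group_add \<Rightarrow> 'a)"
proof (induction n)
  case 0 show ?case by (simp add: fun_eq_iff)
next
  case (Suc n)
  have "ppow p (Suc n) = mulN p ` (range (mulN (p ^ n) :: 'a \<Rightarrow> 'a))" using Suc by simp
  also have "\<dots> = range (mulN (p ^ Suc n))" by (auto simp: image_iff mulN_mult)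
  finally show ?case .
qed

lemma sg_range: "is_subgroup (range (mulN m :: 'a::ab_group_add \<Rightarrow> 'a))"
  unfolding is_subgroup_def
proof (intro conjI ballI)
  show "0 \<in> range (mulN m :: 'a \<Rightarrow> 'a)" using mulN_zero[of m, symmetric] by blast
next
  fix x y :: 'a assume "x \<in> range (mulN m)" "y \<in> range (mulN m)"
  then obtain a b where "x = mulN m a" "y = mulN m b" by blast
  then have "x + y = mulN m (a + b)" by (simp add: mulN_add)
  then show "x + y \<in> range (mulN m)" by blast
next
  fix x :: 'a assume "x \<in> range (mulN m)"
  then obtain a where "x = mulN m a" by blast
  then have "- x = mulN m (- a)" by (simp add: mulN_minus)
  then show "- x \<in> range (mulN m)" by blast
qed

lemma pdiv_pow:
  fixes D B :: "'a::ab_group_add set"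
  assumes p: "prime p" and m: "m = p ^ e * m'" "\<not> p dvd m'"
    and dec: "\<forall>x. \<exists>d\<in>D. \<exists>b\<in>B. x = d + b"
    and dv: "divisible D" and bd: "\<forall>b\<in>B. mulN m b = 0"
  shows "p_divisible p (ppow p e :: 'a set)"
  unfolding p_divisible_def ppow_range
proof
  fix x :: 'a assume "x \<in> range (mulN (p ^ e))"
  then obtain g where g: "x = mulN (p ^ e) g" by blast
  obtain d b where db: "d \<in> D" "b \<in> B" "g = d + b" using dec by blast
  have p1: "p \<ge> 1" using prime_ge_2_nat[OF p] by simp
  obtain d1 where d1: "d1 \<in> D" "mulN p d1 = d" using dv db(1) p1 unfolding divisible_def by blast
  have "coprime p m'" using prime_imp_coprime[OF p m(2)] .
  then obtain u s where us: "p * u = m' * s + 1" using bez p1 by fastforce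
  define y where "y = mulN (p ^ e) (d1 + mulN u b)"
  have "mulN (p * u) b = mulN (m' * s) b + b" using us mulN_plus[of "m'*s" 1 b] by simp
  moreover have "mulN (p ^ e) (mulN (m' * s) b) = 0"
  proof -
    have "mulN (p ^ e) (mulN (m' * s) b) = mulN (s * m) b" unfolding mulN_mult[symmetric] m(1)
      by (simp add: ac_simps)
    also have "\<dots> = 0" unfolding mulN_mult using bd db(2) by simp
    finally show ?thesis .
  qed
  ultimately have e1: "mulN (p ^ e) (mulN (p * u) b) = mulN (p ^ e) b"
    by (simp add: mulN_add)
  have "mulN p y = mulN (p ^ e) (mulN p (d1 + mulN u b))" unfolding y_def by (rule mulN_comm)
  also have "\<dots> = mulN (p ^ e) (d + mulN (p * u) b)" by (simp only: mulN_add d1(2) mulN_mult)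
  also have "\<dots> = mulN (p ^ e) d + mulN (p ^ e) b" by (simp only: mulN_add e1)
  also have "\<dots> = x" by (simp only: g db(3) mulN_add)
  finally have "mulN p y = x" .
  then show "\<exists>y\<in>range (mulN (p ^ e)). mulN p y = x" unfolding y_def by blast
qed

lemma sum_to_ad:
  fixes D B :: "'a::ab_group_add set"
  assumes ids: "internal_direct_sum UNIV D B" and dv: "divisible D" and bd: "bounded_grp B"
  shows "almost_divisible TYPE('a)"
proof -
  obtain m where m: "m \<ge> 1" "\<forall>b\<in>B. mulN m b = 0" using bd unfolding bounded_grp_def by blast
  have dec: "\<forall>x. \<exists>d\<in>D. \<exists>b\<in>B. x = d + b" using ids unfolding internal_direct_sum_def by blast
  have key: "\<And>p. prime p \<Longrightarrow> \<exists>e. (\<exists>m'. m = p ^ e * m' \<and> \<not> p dvd m') \<and> p_divisible p (ppow p e :: 'a set)"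
  proof -
    fix p :: nat assume p: "prime p"
    have "m \<noteq> 0" using m(1) by simp
    obtain r n' where rn: "m = p ^ r * n'" "\<not> p dvd n'" using decomp[OF p \<open>m \<noteq> 0\<close>] by blast
    have "p_divisible p (ppow p r :: 'a set)" by (rule pdiv_pow[OF p rn dec dv m(2)])
    then show "?thesis p" using rn by blast
  qed
  have "{p. prime p \<and> \<not> p_divisible p (UNIV :: 'a set)} \<subseteq> {p. p dvd m}"
  proof
    fix p assume "p \<in> {p. prime p \<and> \<not> p_divisible p (UNIV :: 'a set)}"
    then have p: "prime p" "\<not> p_divisible p (UNIV :: 'a set)" by auto
    show "p \<in> {p. p dvd m}"
    proof (rule ccontr)
      assume "p \<notin> {p. p dvd m}"
      then have "\<not> p dvd m" by simp
      moreover have "m = p ^ 0 * m" by simp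
      ultimately have "p_divisible p (ppow p 0 :: 'a set)" by (intro pdiv_pow[OF p(1) _ _ dec dv m(2)])
      then show False using p(2) by simp
    qed
  qed
  moreover have "finite {p. p dvd m}" by (rule finite_divisors_nat) (use m(1) in simp)
  ultimately have "finite {p. prime p \<and> \<not> p_divisible p (UNIV :: 'a set)}" by (rule finite_subset)
  then show ?thesis unfolding almost_divisible_def using key by blast
qed


lemma range_mult_sub:
  assumes "range (mulN a :: 'a::ab_group_add \<Rightarrow> 'a) \<subseteq> range (mulN b)"
  shows "range (mulN (c * a) :: 'a \<Rightarrow> 'a) \<subseteq> range (mulN (c * b))"
proof
  fix x :: 'a assume "x \<in> range (mulN (c * a))"
  then obtain g where g: "x = mulN c (mulN a g)" by (auto simp: mulN_mult)
  obtain h where "mulN a g = mulN b h" using assms by blast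
  then have "x = mulN (c * b) h" using g by (simp add: mulN_mult)
  then show "x \<in> range (mulN (c * b))" by blast
qed

lemma pdiv_range:
  assumes "p_divisible p (range (mulN (p ^ n)) :: 'a::ab_group_add set)"
  shows "range (mulN (p ^ n) :: 'a \<Rightarrow> 'a) \<subseteq> range (mulN (p ^ Suc n))"
proof
  fix x :: 'a assume "x \<in> range (mulN (p ^ n))"
  then obtain y where "y \<in> range (mulN (p ^ n))" "mulN p y = x" using assms unfolding p_divisible_def by blast
  then obtain h where "x = mulN p (mulN (p ^ n) h)" by blast
  then have "x = mulN (p ^ Suc n) h" by (simp add: mulN_mult)
  then show "x \<in> range (mulN (p ^ Suc n))" by blast
qed

lemma range_divisible:
  assumes pm: "\<And>p. prime p \<Longrightarrow> range (mulN m :: 'a::ab_group_add \<Rightarrow> 'a) \<subseteq> range (mulN (p * m))"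
  shows "divisible (range (mulN m :: 'a \<Rightarrow> 'a))"
proof -
  have "\<forall>x\<in>range (mulN m :: 'a \<Rightarrow> 'a). \<exists>y\<in>range (mulN m). mulN n y = x" if "n \<ge> 1" for n
    using that
  proof (induction n rule: less_induct)
    case (less n)
    show ?case
    proof (cases "n = 1")
      case True then show ?thesis by simp
    next
      case False
      then obtain p where p: "prime p" "p dvd n" using prime_factor_nat by blast
      then obtain q where nq: "n = p * q" by blast
      have "q \<ge> 1" using nq less.prems by (cases q) auto
      moreover have "q < n" using nq prime_ge_2_nat[OF p(1)] \<open>q \<ge> 1\<close> by simp
      ultimately have IH: "\<forall>x\<in>range (mulN m :: 'a \<Rightarrow> 'a). \<exists>y\<in>range (mulN m). mulN q y = x"
        using less.IH by blast
      show ?thesis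
      proof
        fix x :: 'a assume "x \<in> range (mulN m)"
        then have "x \<in> range (mulN (p * m))" using pm[OF p(1)] by blast
        then obtain g where g: "x = mulN p (mulN m g)" by (auto simp: mulN_mult)
        obtain y where y: "y \<in> range (mulN m)" "mulN q y = mulN m g" using IH by blast
        have "mulN n y = x" using g y(2) nq by (simp add: mulN_mult)
        then show "\<exists>y\<in>range (mulN m). mulN n y = x" using y(1) by blast
      qed
    qed
  qed
  then show ?thesis unfolding divisible_def by blast
qed

lemma sg_UNIV: "is_subgroup (UNIV :: 'a::ab_group_add set)" unfolding is_subgroup_def by simp

lemma ad_to_sum:
  assumes ad: "almost_divisible TYPE('a::ab_group_add)"
  shows "\<exists>D B :: 'a set. internal_direct_sum UNIV D B \<and> divisible D \<and> bounded_grp B"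
proof -
  define P where "P = {p. prime p \<and> \<not> p_divisible p (UNIV :: 'a set)}"
  have finP: "finite P" using ad unfolding almost_divisible_def P_def by blast
  define e where "e p = (SOME n. p_divisible p (ppow p n :: 'a set))" for p
  have he: "p_divisible p (ppow p (e p) :: 'a set)" if "prime p" for p
    using ad that unfolding almost_divisible_def e_def by (metis someI_ex)
  define m where "m = (\<Prod>p\<in>P. p ^ e p)"
  have m1: "m \<ge> 1"
  proof -
    have "\<forall>p\<in>P. p ^ e p > 0" unfolding P_def using prime_gt_0_nat by auto
    then have "m > 0" unfolding m_def by (simp add: prod_pos)
    then show ?thesis by simp
  qed
  define R where "R = range (mulN m :: 'a \<Rightarrow> 'a)"
  have pm: "range (mulN m :: 'a \<Rightarrow> 'a) \<subseteq> range (mulN (p * m))" if p: "prime p" for p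
  proof (cases "p \<in> P")
    case False
    then have pd: "\<forall>x::'a. \<exists>y. mulN p y = x" using p unfolding P_def p_divisible_def by auto
    show ?thesis
    proof
      fix x :: 'a assume "x \<in> range (mulN m)"
      then obtain g where g: "x = mulN m g" by blast
      obtain h where "mulN p h = g" using pd by blast
      then have "x = mulN (p * m) h" using g by (simp add: mulN_mult mult.commute)
      then show "x \<in> range (mulN (p * m))" by blast
    qed
  next
    case True
    define m' where "m' = (\<Prod>q\<in>P - {p}. q ^ e q)"
    have mm: "m = m' * p ^ e p" unfolding m_def m'_def using prod.remove[OF finP True] by (simp add: mult.commute)
    have "range (mulN (p ^ e p) :: 'a \<Rightarrow> 'a) \<subseteq> range (mulN (p ^ Suc (e p)))"
      using pdiv_range he[OF p] unfolding ppow_range by blast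
    then have "range (mulN (m' * p ^ e p) :: 'a \<Rightarrow> 'a) \<subseteq> range (mulN (m' * p ^ Suc (e p)))"
      by (rule range_mult_sub)
    moreover have eq: "m' * p ^ Suc (e p) = p * m" using mm by simp
    ultimately show ?thesis by (simp only: mm[symmetric] eq)
  qed
  have dvR: "divisible R" unfolding R_def by (rule range_divisible[OF pm])
  have sgR: "is_subgroup R" unfolding R_def by (rule sg_range)
  obtain C where C: "is_subgroup C" "C \<inter> R \<subseteq> {0}" "\<forall>x. \<exists>d\<in>R. \<exists>c\<in>C. x = d + c"
    using div_summand[OF sg_UNIV sgR _ dvR[unfolded divisible_def]] by blast
  have "R \<inter> C = {0}" using C(2) sg_zero[OF C(1)] sg_zero[OF sgR] by blast
  then have ids: "internal_direct_sum UNIV R C"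
    unfolding internal_direct_sum_def using sgR C(1) C(3) by blast
  have "\<forall>c\<in>C. mulN m c = 0"
  proof
    fix c assume "c \<in> C"
    then have "mulN m c \<in> C" using sg_mulN[OF C(1)] by blast
    moreover have "mulN m c \<in> R" unfolding R_def by blast
    ultimately show "mulN m c = 0" using C(2) by blast
  qed
  then have "bounded_grp C" unfolding bounded_grp_def using m1 by blast
  then show ?thesis using ids dvR by blast
qed


definition rpure :: "'a::ab_group_add set \<Rightarrow> 'a set \<Rightarrow> bool" where
  "rpure N K \<longleftrightarrow> (\<forall>k w z \<nu>. w \<in> K \<longrightarrow> \<nu> \<in> N \<longrightarrow> w = mulN k z + \<nu> \<longrightarrow> (\<exists>\<kappa>\<in>K. \<exists>\<nu>'\<in>N. w = mulN k \<kappa> + \<nu>'))"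

lemma min_mult:
  assumes K: "is_subgroup K" and x: "x \<notin> K" and m: "m \<ge> 1" "mulN m x \<in> K"
  shows "\<exists>p z. prime p \<and> z \<notin> K \<and> mulN p z \<in> K"
proof -
  have ex: "\<exists>k. k \<ge> 1 \<and> mulN k x \<in> K" using m by blast
  define k where "k = (LEAST k. k \<ge> 1 \<and> mulN k x \<in> K)"
  have k: "k \<ge> 1" "mulN k x \<in> K" using LeastI_ex[OF ex] unfolding k_def by auto
  have kmin: "\<And>q. q \<ge> 1 \<Longrightarrow> q < k \<Longrightarrow> mulN q x \<notin> K"
    using not_less_Least unfolding k_def by blast
  have "k \<noteq> 1" using k x by auto
  then obtain p where p: "prime p" "p dvd k" using prime_factor_nat by blast
  then obtain q where kq: "k = p * q" by blast
  have p2: "p \<ge> 2" using prime_ge_2_nat[OF p(1)] .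
  have "q \<ge> 1" using kq k(1) by (cases q) auto
  moreover have "q < k" using kq p2 \<open>q \<ge> 1\<close> by simp
  ultimately have "mulN q x \<notin> K" using kmin by blast
  moreover have "mulN p (mulN q x) \<in> K" using k(2) unfolding kq mulN_mult .
  ultimately show ?thesis using p(1) by blast
qed

lemma coprime_pow_lemma:
  fixes p n' :: nat assumes "prime p" "\<not> p dvd n'" shows "coprime n' (p ^ r)"
  using prime_imp_coprime[OF assms] by (simp add: coprime_commute)

lemma bp_init:
  fixes E :: "'a::ab_group_add set"
  assumes E: "is_subgroup E" and m: "m \<ge> 1" and bE: "\<forall>e\<in>E. mulN m e = 0"
    and pure: "\<forall>n e. e \<in> E \<longrightarrow> (\<exists>z. mulN n z = e) \<longrightarrow> (\<exists>e'\<in>E. mulN n e' = e)"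
  shows "range (mulN m) \<inter> E \<subseteq> {0}" "rpure (range (mulN m)) (ssum E (range (mulN m)))"
proof -
  show "range (mulN m) \<inter> E \<subseteq> {0}"
  proof
    fix x assume x: "x \<in> range (mulN m) \<inter> E"
    then obtain e' where "e' \<in> E" "mulN m e' = x" using pure by blast
    then show "x \<in> {0}" using bE by auto
  qed
  show "rpure (range (mulN m)) (ssum E (range (mulN m)))"
    unfolding rpure_def
  proof (intro allI impI)
    fix k w z \<nu> assume w: "w \<in> ssum E (range (mulN m))" and \<nu>: "\<nu> \<in> range (mulN m)"
      and wz: "w = mulN k z + \<nu>"
    obtain e \<nu>0 where e: "e \<in> E" "\<nu>0 \<in> range (mulN m)" "w = e + \<nu>0" using w by (metis ssum_E)
    obtain g1 g0 where g: "\<nu> = mulN m g1" "\<nu>0 = mulN m g0" using \<nu> e(2) by blast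
    have ee: "e = mulN k z + mulN m (g1 - g0)" using e(3) wz g by (simp add: mulN_diff algebra_simps)
    have "\<exists>e1\<in>E. e = mulN k e1"
    proof (cases "k = 0")
      case True
      then have "e = mulN m (g1 - g0)" using ee by simp
      then obtain e'' where "e'' \<in> E" "mulN m e'' = e" using pure e(1) by blast
      then have "e = 0" using bE by auto
      then show ?thesis using sg_zero[OF E] True by auto
    next
      case False
      obtain u s where us: "k * u = m * s + gcd k m" using bezout_nat[OF False] by blast
      define d where "d = gcd k m"
      obtain k1 m1 where km: "k = d * k1" "m = d * m1" unfolding d_def by (meson gcd_dvd1 gcd_dvd2 dvdE)
      have "e = mulN d (mulN k1 z + mulN m1 (g1 - g0))" using ee km by (simp add: mulN_add mulN_mult)
      then obtain e2 where e2: "e2 \<in> E" "mulN d e2 = e" using pure e(1) by metis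
      have "mulN k (mulN u e2) = mulN (m * s) e2 + mulN d e2"
        unfolding mulN_mult[symmetric] us d_def mulN_plus ..
      also have "\<dots> = e" using bE e2 by (simp add: mulN_mult mulN_comm[of m s])
      finally show ?thesis using sg_mulN[OF E e2(1)] by metis
    qed
    then obtain e1 where e1: "e1 \<in> E" "e = mulN k e1" by blast
    have "e1 \<in> ssum E (range (mulN m))" using ssum_left[OF sg_range e1(1)] .
    then show "\<exists>\<kappa>\<in>ssum E (range (mulN m)). \<exists>\<nu>'\<in>range (mulN m). w = mulN k \<kappa> + \<nu>'"
      using e(2,3) e1(2) by blast
  qed
qed


lemma bp_maxord:
  assumes K: "is_subgroup K" and m: "m \<ge> 1" "\<forall>x. mulN m x \<in> K" and x: "x \<notin> K"
  shows "\<exists>p a y. prime p \<and> a \<ge> 1 \<and> mulN (p ^ a) y \<in> K \<and> mulN (p ^ (a - 1)) y \<notin> K \<and>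
           (\<forall>z. (\<exists>b. mulN (p ^ b) z \<in> K) \<longrightarrow> mulN (p ^ a) z \<in> K)"
proof -
  obtain p z0 where p: "prime p" and z0: "z0 \<notin> K" "mulN p z0 \<in> K" using min_mult[OF K x m(1) m(2)[rule_format]] by blast
  have "m \<noteq> 0" using m(1) by simp
  obtain v m'' where vm: "m = p ^ v * m''" "\<not> p dvd m''" using decomp[OF p \<open>m \<noteq> 0\<close>] by blast
  define S where "S = {z. \<exists>b. mulN (p ^ b) z \<in> K}"
  have hv: "mulN (p ^ v) z \<in> K" if zS: "z \<in> S" for z
  proof -
    obtain b where b: "mulN (p ^ b) z \<in> K" using zS unfolding S_def by blast
    have "m = m'' * p ^ v" using vm(1) by simp
    then have "mulN m z = mulN m'' (mulN (p ^ v) z)" by (simp only: mulN_mult)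
    then have "mulN m'' (mulN (p ^ v) z) \<in> K" using m(2) by metis
    moreover have "mulN (p ^ b) (mulN (p ^ v) z) \<in> K"
      using sg_mulN[OF K b, of "p ^ v"] by (simp add: mulN_comm[of "p ^ b" "p ^ v" z])
    ultimately show ?thesis using cop_lemma[OF K coprime_pow_lemma[OF p vm(2)]] by blast
  qed
  have ex: "\<exists>a. \<forall>z\<in>S. mulN (p ^ a) z \<in> K" using hv by blast
  define a where "a = (LEAST a. \<forall>z\<in>S. mulN (p ^ a) z \<in> K)"
  have ha: "\<forall>z\<in>S. mulN (p ^ a) z \<in> K" using LeastI_ex[OF ex] unfolding a_def .
  have "mulN (p ^ 1) z0 \<in> K" using z0(2) by simp
  then have z0S: "z0 \<in> S" unfolding S_def by blast
  have "a \<noteq> 0"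
  proof
    assume "a = 0" then have "z0 \<in> K" using ha z0S by simp
    then show False using z0 by blast
  qed
  then have "\<not> (\<forall>z\<in>S. mulN (p ^ (a - 1)) z \<in> K)"
    using not_less_Least[of "a - 1" "\<lambda>a. \<forall>z\<in>S. mulN (p ^ a) z \<in> K"] unfolding a_def[symmetric] by simp
  then obtain y where y: "y \<in> S" "mulN (p ^ (a - 1)) y \<notin> K" by blast
  have "mulN (p ^ a) y \<in> K" using ha y(1) by blast
  moreover have "\<forall>z. (\<exists>b. mulN (p ^ b) z \<in> K) \<longrightarrow> mulN (p ^ a) z \<in> K" using ha unfolding S_def by blast
  moreover have "a \<ge> 1" using \<open>a \<noteq> 0\<close> by simp
  ultimately show ?thesis using p y(2) by blast
qed

lemma bp_order:
  assumes K: "is_subgroup K" and p: "prime p" and a: "a \<ge> 1" and ya: "mulN (p ^ a) y \<in> K"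
    and ya1: "mulN (p ^ (a - 1)) y \<notin> K" and n: "mulN n y \<in> K"
  shows "p ^ a dvd n"
proof (cases "n = 0")
  case True then show ?thesis by simp
next
  case False
  obtain r n' where rn: "n = p ^ r * n'" "\<not> p dvd n'" using decomp[OF p False] by blast
  show ?thesis
  proof (cases "a \<le> r")
    case True
    then have "p ^ a dvd p ^ r" by (simp add: le_imp_power_dvd)
    then show ?thesis using rn(1) by simp
  next
    case False
    define w where "w = mulN (p ^ r) y"
    have "mulN n' w \<in> K" using n unfolding w_def rn(1) mulN_mult by (simp add: mulN_comm[of n' "p ^ r"])
    moreover have "mulN (p ^ (a - r)) w \<in> K"
    proof -
      have "p ^ (a - r) * p ^ r = p ^ a" using False by (simp add: power_add[symmetric])
      then show ?thesis using ya unfolding w_def mulN_mult[symmetric] by simp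
    qed
    ultimately have "w \<in> K" using cop_lemma[OF K coprime_pow_lemma[OF p rn(2)]] by blast
    then have "mulN (p ^ (a - 1 - r)) w \<in> K" using sg_mulN[OF K] by blast
    moreover have "p ^ (a - 1 - r) * p ^ r = p ^ (a - 1)" using False by (simp add: power_add[symmetric])
    ultimately have "mulN (p ^ (a - 1)) y \<in> K" unfolding w_def mulN_mult[symmetric] by simp
    then show ?thesis using ya1 by blast
  qed
qed


lemma hv_gen:
  assumes K: "is_subgroup K" and p: "prime p" and vm: "m = p ^ v * m''" "\<not> p dvd m''"
    and mK: "\<forall>x. mulN m x \<in> K" and b: "mulN (p ^ b) z \<in> K"
  shows "mulN (p ^ v) z \<in> K"
proof -
  have "m = m'' * p ^ v" using vm(1) by simp
  then have "mulN m z = mulN m'' (mulN (p ^ v) z)" by (simp only: mulN_mult)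
  then have "mulN m'' (mulN (p ^ v) z) \<in> K" using mK by metis
  moreover have "mulN (p ^ b) (mulN (p ^ v) z) \<in> K"
    using sg_mulN[OF K b, of "p ^ v"] by (simp add: mulN_comm[of "p ^ b" "p ^ v" z])
  ultimately show ?thesis using cop_lemma[OF K coprime_pow_lemma[OF p vm(2)]] by blast
qed

lemma bp_ypure:
  assumes K: "is_subgroup K" and p: "prime p" and a: "a \<ge> 1" and ya: "mulN (p ^ a) y \<in> K"
    and ya1: "mulN (p ^ (a - 1)) y \<notin> K"
    and hS: "\<forall>z. (\<exists>b. mulN (p ^ b) z \<in> K) \<longrightarrow> mulN (p ^ a) z \<in> K"
    and m: "m \<ge> 1" and mK: "\<forall>x. mulN m x \<in> K"
    and h: "mulN j y - mulN k z \<in> K"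
  shows "\<exists>i. mulN j y - mulN k (mulN i y) \<in> K"
proof -
  have "m \<noteq> 0" using m by simp
  obtain v m'' where vm: "m = p ^ v * m''" "\<not> p dvd m''" using decomp[OF p \<open>m \<noteq> 0\<close>] by blast
  have "m'' \<noteq> 0" using vm(1) \<open>m \<noteq> 0\<close> by auto
  obtain u s where us: "m'' * u = p ^ v * s + 1" using bez[OF coprime_pow_lemma[OF p vm(2)] \<open>m'' \<noteq> 0\<close>] by blast
  define \<alpha> where "\<alpha> = m'' * u"
  have yv: "mulN (p ^ v) y \<in> K" using hv_gen[OF K p vm mK ya] .
  have "mulN \<alpha> y = mulN (p ^ v * s) y + y" unfolding \<alpha>_def us by (simp add: mulN_plus)
  then have D1: "mulN \<alpha> y - y = mulN s (mulN (p ^ v) y)" by (simp add: mulN_mult mulN_comm[of "p ^ v" s])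
  then have D1K: "mulN \<alpha> y - y \<in> K" using sg_mulN[OF K yv] by simp
  define zp where "zp = mulN \<alpha> z"
  have "p ^ v * \<alpha> = u * m" unfolding \<alpha>_def vm(1) by simp
  then have "mulN (p ^ v) zp = mulN u (mulN m z)" unfolding zp_def by (simp only: mulN_mult[symmetric])
  then have "mulN (p ^ v) zp \<in> K" using sg_mulN[OF K mK[rule_format]] by simp
  then have zpa: "mulN (p ^ a) zp \<in> K" using hS by blast
  have "mulN \<alpha> (mulN j y - mulN k z) \<in> K" using sg_mulN[OF K h] .
  then have "mulN j (mulN \<alpha> y) - mulN k zp \<in> K"
    unfolding zp_def mulN_diff by (simp add: mulN_comm[of \<alpha> j] mulN_comm[of \<alpha> k])
  moreover have "mulN j (mulN \<alpha> y) = mulN j y + mulN j (mulN \<alpha> y - y)" by (simp add: mulN_diff)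
  ultimately have "(mulN j y - mulN k zp) + mulN j (mulN \<alpha> y - y) \<in> K" by (simp add: algebra_simps)
  then have main: "mulN j y - mulN k zp \<in> K"
    using sg_diff[OF K _ sg_mulN[OF K D1K, of j]] by fastforce
  show ?thesis
  proof (cases "mulN k zp \<in> K")
    case True
    then have "mulN j y \<in> K" using sg_add[OF K main True] by simp
    then show ?thesis by (intro exI[of _ 0]) simp
  next
    case False
    have "k \<noteq> 0"
    proof
      assume "k = 0" then show False using False sg_zero[OF K] by simp
    qed
    obtain t k' where tk: "k = p ^ t * k'" "\<not> p dvd k'" using decomp[OF p \<open>k \<noteq> 0\<close>] by blast
    have ta: "t < a"
    proof (rule ccontr)
      assume "\<not> t < a"
      then have "k = (p ^ (t - a) * k') * p ^ a" using tk(1) by (simp add: power_add[symmetric] ac_simps)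
      then have "mulN k zp = mulN (p ^ (t - a) * k') (mulN (p ^ a) zp)" by (simp only: mulN_mult)
      then have "mulN k zp \<in> K" using sg_mulN[OF K zpa] by simp
      then show False using False by blast
    qed
    have "mulN (p ^ (a - t)) (mulN j y - mulN k zp) \<in> K" using sg_mulN[OF K main] .
    moreover have "p ^ (a - t) * k = k' * p ^ a" using tk(1) ta by (simp add: power_add[symmetric] ac_simps)
    ultimately have "mulN (p ^ (a - t) * j) y - mulN k' (mulN (p ^ a) zp) \<in> K"
      unfolding mulN_diff by (simp add: mulN_mult[symmetric])
    then have "mulN (p ^ (a - t) * j) y \<in> K" using sg_add[OF K _ sg_mulN[OF K zpa, of k']] by fastforce
    then have "p ^ a dvd p ^ (a - t) * j" using bp_order[OF K p a ya ya1] by blast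
    moreover have "p ^ a = p ^ (a - t) * p ^ t" using ta by (simp add: power_add[symmetric])
    ultimately have "p ^ t dvd j" using prime_gt_0_nat[OF p] by simp
    then obtain j' where j': "j = p ^ t * j'" by blast
    have "k' \<noteq> 0" using tk(1) \<open>k \<noteq> 0\<close> by auto
    obtain w s' where ws: "k' * w = p ^ a * s' + 1" using bez[OF coprime_pow_lemma[OF p tk(2)] \<open>k' \<noteq> 0\<close>] by blast
    have "k * (w * j') = p ^ t * j' * (k' * w)" unfolding tk(1) by (simp add: ac_simps)
    also have "\<dots> = p ^ t * j' * (p ^ a * s' + 1)" using ws by simp
    also have "\<dots> = j + (p ^ t * j' * s') * p ^ a" unfolding j' by (simp add: algebra_simps)
    finally have "k * (w * j') = j + (p ^ t * j' * s') * p ^ a" .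
    then have "mulN k (mulN (w * j') y) = mulN j y + mulN (p ^ t * j' * s') (mulN (p ^ a) y)"
      by (simp only: mulN_mult[symmetric] mulN_plus)
    then have "mulN j y - mulN k (mulN (w * j') y) = - mulN (p ^ t * j' * s') (mulN (p ^ a) y)" by simp
    then have "mulN j y - mulN k (mulN (w * j') y) \<in> K" using sg_neg[OF K sg_mulN[OF K ya]] by simp
    then show ?thesis by blast
  qed
qed


lemma bp_step:
  fixes E C :: "'a::ab_group_add set"
  assumes E: "is_subgroup E" and m: "m \<ge> 1" and C: "is_subgroup C" and NC: "range (mulN m) \<subseteq> C"
    and CE: "C \<inter> E \<subseteq> {0}" and rp: "rpure (range (mulN m)) (ssum E C)" and x: "x \<notin> ssum E C"
  shows "\<exists>C'. is_subgroup C' \<and> range (mulN m) \<subseteq> C' \<and> C' \<inter> E \<subseteq> {0} \<and>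
              rpure (range (mulN m)) (ssum E C') \<and> C \<subseteq> C' \<and> C' \<noteq> C"
proof -
  define N where "N = range (mulN m :: 'a \<Rightarrow> 'a)"
  define K where "K = ssum E C"
  have K: "is_subgroup K" unfolding K_def using sg_ssum[OF E C] .
  have CK: "C \<subseteq> K" unfolding K_def using ssum_right[OF E] by blast
  have EK: "E \<subseteq> K" unfolding K_def using ssum_left[OF C] by blast
  have mK: "\<forall>x. mulN m x \<in> K" using NC CK by blast
  obtain p a y where p: "prime p" and a: "a \<ge> 1" and ya: "mulN (p ^ a) y \<in> K"
    and ya1: "mulN (p ^ (a - 1)) y \<notin> K" and hS: "\<forall>z. (\<exists>b. mulN (p ^ b) z \<in> K) \<longrightarrow> mulN (p ^ a) z \<in> K"
    using bp_maxord[OF K m mK x[folded K_def]] by blast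
  have rpK: "rpure N K" using rp unfolding N_def K_def .
  have "mulN (p ^ a) y = mulN (p ^ a) y + 0" by simp
  moreover have "(0::'a) \<in> N" unfolding N_def using mulN_zero[of m] by (metis rangeI)
  ultimately obtain \<kappa> \<nu> where \<kappa>: "\<kappa> \<in> K" "\<nu> \<in> N" "mulN (p ^ a) y = mulN (p ^ a) \<kappa> + \<nu>"
    using rpK ya unfolding rpure_def by blast
  define y' where "y' = y - \<kappa>"
  have hy': "mulN (p ^ a) y' = \<nu>" unfolding y'_def mulN_diff using \<kappa>(3) by simp
  have \<nu>C: "\<nu> \<in> C" using \<kappa>(2) NC unfolding N_def by blast
  have yK: "y \<notin> K"
  proof
    assume "y \<in> K" then have "mulN (p ^ (a - 1)) y \<in> K" using sg_mulN[OF K] by blast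
    then show False using ya1 by blast
  qed
  have y'K: "y' \<notin> K"
  proof
    assume "y' \<in> K" then have "y' + \<kappa> \<in> K" using sg_add[OF K _ \<kappa>(1)] by blast
    then show False using yK unfolding y'_def by simp
  qed
  have ord: "\<And>n. mulN n y \<in> K \<Longrightarrow> p ^ a dvd n" using bp_order[OF K p a ya ya1] .
  have ypure: "\<And>j k z. mulN j y - mulN k z \<in> K \<Longrightarrow> \<exists>i. mulN j y - mulN k (mulN i y) \<in> K"
    using bp_ypure[OF K p a ya ya1 hS m mK] by blast
  have my: "mulN i y = mulN i y' + mulN i \<kappa>" for i unfolding y'_def by (simp add: mulN_diff)
  define C' where "C' = {c + mulN i y' |c i. c \<in> C}"
  have sgC': "is_subgroup C'"
    unfolding is_subgroup_def
  proof (intro conjI ballI)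
    have "(0::'a) = 0 + mulN 0 y'" by simp
    then show "0 \<in> C'" unfolding C'_def using sg_zero[OF C] by blast
  next
    fix u v assume "u \<in> C'" "v \<in> C'"
    then obtain c i c' i' where e: "u = c + mulN i y'" "v = c' + mulN i' y'" "c \<in> C" "c' \<in> C"
      unfolding C'_def by blast
    have "u + v = (c + c') + mulN (i + i') y'" unfolding e(1,2) by (simp add: mulN_plus algebra_simps)
    then show "u + v \<in> C'" unfolding C'_def using sg_add[OF C e(3,4)] by blast
  next
    fix u assume "u \<in> C'"
    then obtain c i where e: "u = c + mulN i y'" "c \<in> C" unfolding C'_def by blast
    have pa: "p ^ a \<ge> 1" using prime_gt_0_nat[OF p] by simp
    have "mulN ((p ^ a - 1) * i) y' + mulN i y' = mulN (p ^ a * i) y'"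
      unfolding mulN_plus[symmetric] using pa by (simp add: algebra_simps)
    also have "\<dots> = mulN i \<nu>" by (simp add: mulN_mult mulN_comm[of "p ^ a" i] hy')
    finally have A: "mulN ((p ^ a - 1) * i) y' = mulN i \<nu> - mulN i y'" by (simp add: eq_diff_eq)
    have "- u = (- c - mulN i \<nu>) + mulN ((p ^ a - 1) * i) y'" unfolding e(1) A
      by (simp add: algebra_simps)
    moreover have "- c - mulN i \<nu> \<in> C" using sg_diff[OF C sg_neg[OF C e(2)] sg_mulN[OF C \<nu>C]] .
    ultimately show "- u \<in> C'" unfolding C'_def by blast
  qed
  have CC': "C \<subseteq> C'"
  proof
    fix c assume "c \<in> C"
    moreover have "c = c + mulN 0 y'" by simp
    ultimately show "c \<in> C'" unfolding C'_def by blast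
  qed
  have y'C': "y' \<in> C'"
  proof -
    have "y' = 0 + mulN 1 y'" by simp
    then show ?thesis unfolding C'_def using sg_zero[OF C] by blast
  qed
  have "C' \<noteq> C" using y'C' y'K CK by blast
  moreover have "C' \<inter> E \<subseteq> {0}"
  proof
    fix w assume w: "w \<in> C' \<inter> E"
    then obtain c i where e: "w = c + mulN i y'" "c \<in> C" unfolding C'_def by blast
    have "mulN i y' = w - c" using e(1) by simp
    moreover have "w - c \<in> K" using sg_diff[OF K] w EK CK e(2) by blast
    ultimately have "mulN i y' \<in> K" by simp
    then have "mulN i y \<in> K" unfolding my using sg_add[OF K _ sg_mulN[OF K \<kappa>(1)]] by blast
    then obtain i1 where "i = p ^ a * i1" using ord by blast
    then have "mulN i y' = mulN i1 \<nu>" by (simp add: mulN_mult mulN_comm[of "p ^ a" i1] hy')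
    then have "mulN i y' \<in> C" using sg_mulN[OF C \<nu>C] by simp
    then have "w \<in> C" using e sg_add[OF C] by blast
    then show "w \<in> {0}" using w CE by blast
  qed
  moreover have "range (mulN m) \<subseteq> C'" using NC CC' by blast
  moreover have "rpure (range (mulN m)) (ssum E C')"
    unfolding rpure_def N_def[symmetric]
  proof (intro allI impI)
    fix n w z \<nu>1 assume w: "w \<in> ssum E C'" and \<nu>1: "\<nu>1 \<in> N" and wz: "w = mulN n z + \<nu>1"
    obtain e c j where ecj: "e \<in> E" "c \<in> C" "w = e + (c + mulN j y')"
      using w unfolding C'_def by (auto elim!: ssum_E)
    define \<kappa>0 where "\<kappa>0 = e + c"
    have \<kappa>0: "\<kappa>0 \<in> K" unfolding \<kappa>0_def K_def using ecj(1,2) by (rule ssum_I)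
    have wk: "w = \<kappa>0 + mulN j y'" unfolding \<kappa>0_def ecj(3) by (simp add: algebra_simps)
    have \<nu>1K: "\<nu>1 \<in> K" using \<nu>1 NC CK unfolding N_def by blast
    have nz: "mulN n z = \<kappa>0 + mulN j y' - \<nu>1" using wz wk by (simp add: eq_diff_eq)
    have "mulN j y - mulN n z = (mulN j \<kappa> - \<kappa>0) + \<nu>1"
      unfolding nz my[of j] by (simp add: algebra_simps)
    moreover have "(mulN j \<kappa> - \<kappa>0) + \<nu>1 \<in> K"
      using sg_add[OF K sg_diff[OF K sg_mulN[OF K \<kappa>(1)] \<kappa>0] \<nu>1K] .
    ultimately obtain i where i: "mulN j y - mulN n (mulN i y) \<in> K" using ypure by metis
    define T where "T = mulN j y' - mulN n (mulN i y')"
    have "T = (mulN j y - mulN n (mulN i y)) - mulN j \<kappa> + mulN n (mulN i \<kappa>)"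
      unfolding T_def my mulN_add by (simp add: algebra_simps)
    then have TK: "T \<in> K"
      using sg_add[OF K sg_diff[OF K i sg_mulN[OF K \<kappa>(1)]] sg_mulN[OF K sg_mulN[OF K \<kappa>(1)]]] by simp
    have "w - mulN n (mulN i y') = \<kappa>0 + T" unfolding T_def wk by (simp add: algebra_simps)
    then have wK: "w - mulN n (mulN i y') \<in> K" using sg_add[OF K \<kappa>0 TK] by simp
    have "w - mulN n (mulN i y') = mulN n (z - mulN i y') + \<nu>1" unfolding wz by (simp add: mulN_diff algebra_simps)
    then obtain \<kappa>1 \<nu>' where k1: "\<kappa>1 \<in> K" "\<nu>' \<in> N" "w - mulN n (mulN i y') = mulN n \<kappa>1 + \<nu>'"
      using rpK wK \<nu>1 unfolding rpure_def by blast
    obtain e1 c1 where e1: "e1 \<in> E" "c1 \<in> C" "\<kappa>1 = e1 + c1" using k1(1) unfolding K_def by (metis ssum_E)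
    have "c1 + mulN i y' \<in> C'" unfolding C'_def using e1(2) by blast
    then have mem: "e1 + (c1 + mulN i y') \<in> ssum E C'" using e1(1) by (intro ssum_I)
    have "w = mulN n \<kappa>1 + \<nu>' + mulN n (mulN i y')" using k1(3) by (simp add: diff_eq_eq)
    then have "w = mulN n (e1 + (c1 + mulN i y')) + \<nu>'"
      unfolding e1(3) by (simp add: mulN_add algebra_simps)
    then show "\<exists>\<kappa>\<in>ssum E C'. \<exists>\<nu>'\<in>N. w = mulN n \<kappa> + \<nu>'" using k1(2) mem by blast
  qed
  ultimately show ?thesis using sgC' CC' by blast
qed


lemma bp_summand:
  fixes E :: "'a::ab_group_add set"
  assumes E: "is_subgroup E" and m: "m \<ge> 1" and bE: "\<forall>e\<in>E. mulN m e = 0"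
    and pure: "\<forall>n e. e \<in> E \<longrightarrow> (\<exists>z. mulN n z = e) \<longrightarrow> (\<exists>e'\<in>E. mulN n e' = e)"
  shows "\<exists>C. is_subgroup C \<and> C \<inter> E \<subseteq> {0} \<and> (\<forall>x. \<exists>e\<in>E. \<exists>c\<in>C. x = e + c)"
proof -
  define F where "F = {C. is_subgroup C \<and> range (mulN m) \<subseteq> C \<and> C \<inter> E \<subseteq> {0} \<and> rpure (range (mulN m)) (ssum E C)}"
  have NF: "range (mulN m) \<in> F" unfolding F_def using sg_range[of m] bp_init[OF E m bE pure] by simp
  have "\<forall>Ch\<in>chains F. \<exists>U\<in>F. \<forall>X\<in>Ch. X \<subseteq> U"
  proof
    fix Ch assume ch: "Ch \<in> chains F"
    show "\<exists>U\<in>F. \<forall>X\<in>Ch. X \<subseteq> U"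
    proof (cases "Ch = {}")
      case True
      then show ?thesis using NF by blast
    next
      case False
      have CF: "\<And>X. X \<in> Ch \<Longrightarrow> X \<in> F" using chainsD2[OF ch] by blast
      have "is_subgroup (\<Union>Ch)" by (rule chain_union_sg[OF ch False]) (simp add: F_def)
      moreover have "range (mulN m) \<subseteq> \<Union>Ch"
      proof -
        obtain X where X: "X \<in> Ch" using False by blast
        have "range (mulN m) \<subseteq> X" using CF[OF X] unfolding F_def by simp
        then show ?thesis using X by blast
      qed
      moreover have "\<Union>Ch \<inter> E \<subseteq> {0}"
      proof
        fix x assume "x \<in> \<Union>Ch \<inter> E"
        then obtain X where X: "X \<in> Ch" "x \<in> X" "x \<in> E" by blast
        have "X \<inter> E \<subseteq> {0}" using CF[OF X(1)] unfolding F_def by simp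
        then show "x \<in> {0}" using X by blast
      qed
      moreover have "rpure (range (mulN m)) (ssum E (\<Union>Ch))"
        unfolding rpure_def
      proof (intro allI impI)
        fix k w z \<nu> assume w: "w \<in> ssum E (\<Union>Ch)" "\<nu> \<in> range (mulN m)" "w = mulN k z + \<nu>"
        obtain e c where ec: "e \<in> E" "c \<in> \<Union>Ch" "w = e + c" using w(1) by (metis ssum_E)
        then obtain X where X: "X \<in> Ch" "c \<in> X" by blast
        have wX: "w \<in> ssum E X" unfolding ec(3) using ec(1) X(2) by (rule ssum_I)
        have rpX: "rpure (range (mulN m)) (ssum E X)" using CF[OF X(1)] unfolding F_def by simp
        obtain \<kappa> \<nu>' where k: "\<kappa> \<in> ssum E X" "\<nu>' \<in> range (mulN m)" "w = mulN k \<kappa> + \<nu>'"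
          using rpX[unfolded rpure_def, rule_format, OF wX w(2) w(3)] by blast
        have "ssum E X \<subseteq> ssum E (\<Union>Ch)"
        proof
          fix u assume "u \<in> ssum E X"
          then obtain e' c' where "e' \<in> E" "c' \<in> X" "u = e' + c'" by (rule ssum_E)
          then show "u \<in> ssum E (\<Union>Ch)" using X(1) ssum_I[of e' E c' "\<Union>Ch"] by blast
        qed
        then show "\<exists>\<kappa>\<in>ssum E (\<Union>Ch). \<exists>\<nu>'\<in>range (mulN m). w = mulN k \<kappa> + \<nu>'" using k by blast
      qed
      ultimately have "\<Union>Ch \<in> F" unfolding F_def by simp
      moreover have "\<forall>X\<in>Ch. X \<subseteq> \<Union>Ch" by blast
      ultimately show ?thesis by (rule bexI[rotated])
    qed
  qed
  from Zorn_Lemma2[OF this] obtain M where M: "M \<in> F" and max: "\<forall>X\<in>F. M \<subseteq> X \<longrightarrow> X = M" by blast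
  have Ms: "is_subgroup M" "range (mulN m) \<subseteq> M" "M \<inter> E \<subseteq> {0}" "rpure (range (mulN m)) (ssum E M)"
    using M unfolding F_def by blast+
  have "\<forall>x. x \<in> ssum E M"
  proof (rule ccontr)
    assume "\<not> (\<forall>x. x \<in> ssum E M)"
    then obtain x where "x \<notin> ssum E M" by blast
    then obtain C' where "is_subgroup C'" "range (mulN m) \<subseteq> C'" "C' \<inter> E \<subseteq> {0}" "rpure (range (mulN m)) (ssum E C')" "M \<subseteq> C'" "C' \<noteq> M"
      using bp_step[OF E m Ms(1) Ms(2) Ms(3) Ms(4) \<open>x \<notin> ssum E M\<close>] by blast
    then have "C' \<in> F" unfolding F_def by blast
    then show False using max \<open>M \<subseteq> C'\<close> \<open>C' \<noteq> M\<close> by blast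
  qed
  have "\<forall>x. \<exists>e\<in>E. \<exists>c\<in>M. x = e + c"
  proof
    fix x
    from \<open>\<forall>x. x \<in> ssum E M\<close> have "x \<in> ssum E M" ..
    then show "\<exists>e\<in>E. \<exists>c\<in>M. x = e + c" by (rule ssum_E) blast
  qed
  then show ?thesis by (intro exI[of _ M]) (use Ms(1,3) in blast)
qed


lemma hom0: "group_hom f \<Longrightarrow> f 0 = 0"
  unfolding group_hom_def by (metis add_0 add_cancel_right_left)
lemma homneg: "group_hom f \<Longrightarrow> f (- x) = - f x"
  using hom0[of f] unfolding group_hom_def by (metis add.right_inverse eq_neg_iff_add_eq_0)
lemma homdiff: "group_hom f \<Longrightarrow> f (x - y) = f x - f y"
  using homneg[of f y] unfolding group_hom_def by (metis diff_conv_add_uminus)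
lemma hommulN: "group_hom f \<Longrightarrow> f (mulN n x) = mulN n (f x)"
  by (induction n) (auto simp: hom0 group_hom_def)

lemma sg_image: assumes f: "group_hom f" and S: "is_subgroup S" shows "is_subgroup (f ` S)"
  unfolding is_subgroup_def
proof (intro conjI ballI)
  show "0 \<in> f ` S" using hom0[OF f] sg_zero[OF S] by (metis image_eqI)
next
  fix x y assume "x \<in> f ` S" "y \<in> f ` S"
  then obtain a b where "a \<in> S" "b \<in> S" "x = f a" "y = f b" by blast
  then show "x + y \<in> f ` S" using f sg_add[OF S] unfolding group_hom_def by (metis image_eqI)
next
  fix x assume "x \<in> f ` S"
  then obtain a where "a \<in> S" "x = f a" by blast
  then show "- x \<in> f ` S" using homneg[OF f] sg_neg[OF S] by (metis image_eqI)
qed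

lemma sg_inter: "is_subgroup S \<Longrightarrow> is_subgroup T \<Longrightarrow> is_subgroup (S \<inter> T)"
  unfolding is_subgroup_def by blast

lemma ad_to_ac:
  assumes ad: "almost_divisible TYPE('a::ab_group_add)"
  shows "alg_compact_wrt TYPE('a) TYPE('b::ab_group_add)"
  unfolding alg_compact_wrt_def
proof (intro allI impI)
  fix f :: "'a \<Rightarrow> 'b" assume pe: "pure_embedding f"
  have f: "group_hom f" and inj: "inj f"
    and fp: "\<forall>n a. (\<exists>z::'b. mulN n z = f a) \<longrightarrow> (\<exists>a'. mulN n (f a') = f a)"
    using pe unfolding pure_embedding_def by blast+
  obtain D B :: "'a set" where ids: "internal_direct_sum UNIV D B" and dv: "divisible D" and bd: "bounded_grp B"
    using ad_to_sum[OF ad] by blast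
  have D: "is_subgroup D" and B: "is_subgroup B" and DB: "D \<inter> B = {0}" and dec: "\<forall>x. \<exists>d\<in>D. \<exists>b\<in>B. x = d + b"
    using ids unfolding internal_direct_sum_def by blast+
  obtain m where m: "m \<ge> 1" "\<forall>b\<in>B. mulN m b = 0" using bd unfolding bounded_grp_def by blast
  define fB where "fB = f ` B"
  have sgfB: "is_subgroup fB" unfolding fB_def using sg_image[OF f B] .
  have bfB: "\<forall>e\<in>fB. mulN m e = 0"
  proof
    fix e assume "e \<in> fB"
    then obtain b where "b \<in> B" "e = f b" unfolding fB_def by blast
    then show "mulN m e = 0" using m(2) hommulN[OF f, of m b] hom0[OF f] by simp
  qed
  have purefB: "\<forall>n e. e \<in> fB \<longrightarrow> (\<exists>z. mulN n z = e) \<longrightarrow> (\<exists>e'\<in>fB. mulN n e' = e)"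
  proof (intro allI impI)
    fix n e assume e: "e \<in> fB" and z: "\<exists>z. mulN n z = e"
    obtain b where b: "b \<in> B" "e = f b" using e unfolding fB_def by blast
    have "\<exists>z. mulN n z = f b" using z b(2) by simp
    then have "\<exists>a'. mulN n (f a') = f b" by (rule fp[rule_format])
    then obtain a' where "mulN n (f a') = f b" by blast
    then have "f (mulN n a') = f b" using hommulN[OF f] by simp
    then have na: "mulN n a' = b" using inj by (simp add: inj_eq)
    obtain d b' where db: "d \<in> D" "b' \<in> B" "a' = d + b'" using dec by blast
    have bsum: "b = mulN n d + mulN n b'" unfolding na[symmetric] db(3) by (rule mulN_add)
    then have "mulN n d = b - mulN n b'" by simp
    moreover have "b - mulN n b' \<in> B" using sg_diff[OF B b(1) sg_mulN[OF B db(2)]] .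
    moreover have "mulN n d \<in> D" using sg_mulN[OF D db(1)] .
    ultimately have "mulN n d \<in> D \<inter> B" by simp
    then have "mulN n d = 0" using DB by simp
    then have "b = mulN n b'" using bsum by simp
    then have "e = mulN n (f b')" using b(2) hommulN[OF f] by simp
    moreover have "f b' \<in> fB" unfolding fB_def using db(2) by (rule imageI)
    ultimately show "\<exists>e'\<in>fB. mulN n e' = e" by (intro bexI[of _ "f b'"]) simp_all
  qed
  obtain C1 where C1: "is_subgroup C1" "C1 \<inter> fB \<subseteq> {0}" "\<forall>x. \<exists>e\<in>fB. \<exists>c\<in>C1. x = e + c"
    using bp_summand[OF sgfB m(1) bfB purefB] by blast
  have sgfA: "is_subgroup (range f)" using sg_image[OF f sg_UNIV] .
  define D2 where "D2 = range f \<inter> C1"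
  have sgD2: "is_subgroup D2" unfolding D2_def using sg_inter[OF sgfA C1(1)] .
  have D2C1: "D2 \<subseteq> C1" unfolding D2_def by blast
  have dvD2: "\<forall>n\<ge>1. \<forall>x\<in>D2. \<exists>y\<in>D2. mulN n y = x"
  proof (intro allI impI ballI)
    fix n :: nat and x assume n: "n \<ge> 1" and x: "x \<in> D2"
    obtain a where a: "x = f a" "x \<in> C1" using x unfolding D2_def by blast
    obtain d b where db: "d \<in> D" "b \<in> B" "a = d + b" using dec by blast
    obtain d' where d': "d' \<in> D" "mulN n d' = d" using dv db(1) n unfolding divisible_def by blast
    obtain e c where ec: "e \<in> fB" "c \<in> C1" "f d' = e + c" using C1(3) by blast
    have "f d = mulN n (f d')" using hommulN[OF f, of n d'] d'(2) by simp
    also have "\<dots> = mulN n e + mulN n c" unfolding ec(3) by (rule mulN_add)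
    finally have fd: "f d = mulN n e + mulN n c" .
    have xfd: "x = f d + f b" using a(1) db(3) f unfolding group_hom_def by simp
    have eq: "mulN n c - x = - (mulN n e + f b)" unfolding xfd fd by (simp add: algebra_simps)
    have fbB: "f b \<in> fB" unfolding fB_def using db(2) by (rule imageI)
    have m1: "- (mulN n e + f b) \<in> fB"
      using sg_neg[OF sgfB sg_add[OF sgfB sg_mulN[OF sgfB ec(1)] fbB]] .
    have "mulN n c - x \<in> C1" using sg_diff[OF C1(1) sg_mulN[OF C1(1) ec(2)] a(2)] .
    then have "mulN n c - x \<in> C1 \<inter> fB" using eq m1 by simp
    then have "mulN n c - x \<in> {0}" using C1(2) by (rule subsetD[rotated])
    then have "mulN n c = x" by simp
    moreover have "c \<in> D2"
    proof -
      obtain b1 where b1: "e = f b1" using ec(1) unfolding fB_def by blast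
      have "c = f d' - e" using ec(3) by simp
      then have "c = f (d' - b1)" using b1 homdiff[OF f] by simp
      then show ?thesis unfolding D2_def using ec(2) by blast
    qed
    ultimately show "\<exists>y\<in>D2. mulN n y = x" by blast
  qed
  obtain C where C: "is_subgroup C" "C \<subseteq> C1" "C \<inter> D2 \<subseteq> {0}" "\<forall>x\<in>C1. \<exists>d\<in>D2. \<exists>c\<in>C. x = d + c"
    using div_summand[OF C1(1) sgD2 D2C1 dvD2] by blast
  have "range f \<inter> C = {0}"
  proof
    show "range f \<inter> C \<subseteq> {0}" using C(2,3) unfolding D2_def by blast
    show "{0} \<subseteq> range f \<inter> C" using sg_zero[OF sgfA] sg_zero[OF C(1)] by blast
  qed
  moreover have "\<forall>x. \<exists>s\<in>range f. \<exists>t\<in>C. x = s + t"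
  proof
    fix x
    obtain e c1 where ec: "e \<in> fB" "c1 \<in> C1" "x = e + c1" using C1(3) by blast
    obtain d2 c where dc: "d2 \<in> D2" "c \<in> C" "c1 = d2 + c" using C(4) ec(2) by blast
    have "e + d2 \<in> range f" using sg_add[OF sgfA] ec(1) dc(1) unfolding fB_def D2_def by blast
    moreover have "x = (e + d2) + c" using ec(3) dc(3) by (simp add: add.assoc)
    ultimately show "\<exists>s\<in>range f. \<exists>t\<in>C. x = s + t" using dc(2) by blast
  qed
  ultimately show "\<exists>C. internal_direct_sum UNIV (range f) C"
    unfolding internal_direct_sum_def using sgfA C(1) by blast
qed

theorem mainTheorem4:
  shows "(almost_divisible TYPE('a::ab_group_add) \<longleftrightarrow>
           (\<exists>D B :: 'a set. internal_direct_sum UNIV D B \<and> divisible D \<and> bounded_grp B))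
       \<and> (almost_divisible TYPE('a) \<longrightarrow> alg_compact_wrt TYPE('a) TYPE('b::ab_group_add))"
  using ad_to_sum sum_to_ad ad_to_ac by blast

end
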